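(* Let $\Gamma:\mathring\Delta\to\mathbb{R}$ satisfy condition (K). Then for any $T>0$ there exists a sequence of continuous kernels $\Gamma_M:\Delta_T\to\mathbb{R}$ such that $\int_0^t(\Gamma(t,s)-\Gamma_M(t,s))^2\mathrm{d}s\to0$ as $M\to\infty$ for every $t\in[0,T]$, and $$\int_s^t\Gamma_M(t,u)^2\mathrm{d}u+\int_0^s(\Gamma_M(t,u)-\Gamma_M(s,u))^2\mathrm{d}u\le2\eta|t-s|^{2\gamma},\quad (t,s)\in\Delta_T,\ M\in\mathbb{N},$$ where $\eta,\gamma$ are the constants of condition (K) for $T$. Besides, if there exists $\varepsilon>0$ such that either $\Gamma(t,s)\ge0$ for all $(t,s)\in\Delta$ with $s\ge t-\varepsilon$, or $\Gamma(t,s)\le0$ for all such $(t,s)$, then the $\Gamma_M$ may be chosen such that $\Gamma_M(s,s)\ne0$ for almost every $s$.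
   Context: $\Delta=\{(t,s):0\le s\le t\}$, $\mathring\Delta=\{(t,s):0<s<t\}$, $\Delta_T=\{(t,s):0\le s\le t\le T\}$. Condition (K): for every $T\in(0,\infty)$ there exist $\eta>0$, $\gamma\in(0,1/2]$ with $\int_s^t\Gamma(t,u)^2\mathrm{d}u+\int_0^s(\Gamma(t,u)-\Gamma(s,u))^2\mathrm{d}u\le\eta(t-s)^{2\gamma}$ for $(t,s)\in\Delta_T$. *)

theory Defs
  imports "HOL-Analysis.Analysis"
begin

definition kernel_incr :: "(real \<Rightarrow> real \<Rightarrow> real) \<Rightarrow> real \<Rightarrow> real \<Rightarrow> ennreal" where
  "kernel_incr K t s =
     (\<integral>\<^sup>+ u. ennreal ((K t u)\<^sup>2) * indicator {s<..<t} u \<partial>lborel)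
   + (\<integral>\<^sup>+ u. ennreal ((K t u - K s u)\<^sup>2) * indicator {0<..<s} u \<partial>lborel)"

definition condK_T :: "(real \<Rightarrow> real \<Rightarrow> real) \<Rightarrow> real \<Rightarrow> real \<Rightarrow> real \<Rightarrow> bool" where
  "condK_T K T \<eta> \<gamma> \<longleftrightarrow> \<eta> > 0 \<and> 0 < \<gamma> \<and> \<gamma> \<le> 1/2 \<and>
     (\<forall>t s. 0 \<le> s \<and> s \<le> t \<and> t \<le> T \<longrightarrow>
        kernel_incr K t s \<le> ennreal (\<eta> * (t - s) powr (2 * \<gamma>)))"

text \<open>Condition (K): sectionwise measurability of the kernel on the open simplex
  (implicit for the integrals to make sense) and, for every T > 0, constants eta, gamma.\<close>
definition condK :: "(real \<Rightarrow> real \<Rightarrow> real) \<Rightarrow> bool" where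
  "condK K \<longleftrightarrow>
     (\<forall>t>0. (\<lambda>u. K t u * indicator {0<..<t} u) \<in> borel_measurable lborel) \<and>
     (\<forall>T>0. \<exists>\<eta> \<gamma>. condK_T K T \<eta> \<gamma>)"

end

theory Submission
  imports Defs
begin


lemma CS_int:
  fixes g p :: "real \<Rightarrow> real"
  assumes [measurable]: "g \<in> borel_measurable lborel" "p \<in> borel_measurable lborel"
  shows "ennreal ((\<integral>x. g x * p x \<partial>lborel)\<^sup>2) \<le>
     (\<integral>\<^sup>+x. ennreal ((g x)\<^sup>2) \<partial>lborel) * (\<integral>\<^sup>+x. ennreal ((p x)\<^sup>2) \<partial>lborel)"
proof -
  have "ennreal ((\<integral>x. g x * p x \<partial>lborel)\<^sup>2) = (ennreal \<bar>\<integral>x. g x * p x \<partial>lborel\<bar>)\<^sup>2"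
    by (simp add: ennreal_power)
  also have "\<dots> \<le> (\<integral>\<^sup>+x. ennreal \<bar>g x * p x\<bar> \<partial>lborel)\<^sup>2"
    proof (intro power_mono)
    show "ennreal \<bar>\<integral>x. g x * p x \<partial>lborel\<bar> \<le> (\<integral>\<^sup>+x. ennreal \<bar>g x * p x\<bar> \<partial>lborel)"
    proof (cases "integrable lborel (\<lambda>x. g x * p x)")
      case True
      then show ?thesis using integral_norm_bound_ennreal[of lborel "\<lambda>x. g x * p x"] by simp
    qed (simp add: not_integrable_integral_eq)
  qed simp
  also have "\<dots> = (\<integral>\<^sup>+x. ennreal \<bar>g x\<bar> * ennreal \<bar>p x\<bar> \<partial>lborel)\<^sup>2"
    by (simp add: abs_mult ennreal_mult)
  also have "\<dots> \<le> (\<integral>\<^sup>+x. (ennreal \<bar>g x\<bar>)^2 \<partial>lborel) * (\<integral>\<^sup>+x. (ennreal \<bar>p x\<bar>)^2 \<partial>lborel)"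
    by (rule Cauchy_Schwarz_nn_integral) auto
  also have "\<dots> = (\<integral>\<^sup>+x. ennreal ((g x)\<^sup>2) \<partial>lborel) * (\<integral>\<^sup>+x. ennreal ((p x)\<^sup>2) \<partial>lborel)"
    by (simp add: ennreal_power)
  finally show ?thesis .
qed

lemma L2_prod_integrable:
  fixes g p :: "real \<Rightarrow> real"
  assumes [measurable]: "g \<in> borel_measurable lborel" "p \<in> borel_measurable lborel"
    and fg: "(\<integral>\<^sup>+x. ennreal ((g x)\<^sup>2) \<partial>lborel) < \<infinity>"
    and fp: "(\<integral>\<^sup>+x. ennreal ((p x)\<^sup>2) \<partial>lborel) < \<infinity>"
  shows "integrable lborel (\<lambda>x. g x * p x)"
proof -
  have "(\<integral>\<^sup>+x. ennreal \<bar>g x\<bar> * ennreal \<bar>p x\<bar> \<partial>lborel)\<^sup>2 \<le> (\<integral>\<^sup>+x. (ennreal \<bar>g x\<bar>)^2 \<partial>lborel) * (\<integral>\<^sup>+x. (ennreal \<bar>p x\<bar>)^2 \<partial>lborel)"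
    by (rule Cauchy_Schwarz_nn_integral) auto
  also have "\<dots> = (\<integral>\<^sup>+x. ennreal ((g x)\<^sup>2) \<partial>lborel) * (\<integral>\<^sup>+x. ennreal ((p x)\<^sup>2) \<partial>lborel)"
    by (simp add: ennreal_power)
  also have "\<dots> < \<infinity>" using fg fp by (simp add: ennreal_mult_less_top)
  finally have "(\<integral>\<^sup>+x. ennreal \<bar>g x\<bar> * ennreal \<bar>p x\<bar> \<partial>lborel) < \<infinity>"
    by (simp add: power_less_top_ennreal)
  then show ?thesis
    by (subst integrable_iff_bounded) (simp add: abs_mult ennreal_mult)
qed

lemma nn_sq_indicator:
  fixes a b :: real
  shows "(\<integral>\<^sup>+x. ennreal ((indicator {a..b} x)\<^sup>2) \<partial>lborel) = ennreal (max 0 (b - a))"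
proof -
  have "(\<integral>\<^sup>+x. ennreal ((indicator {a..b} x)\<^sup>2) \<partial>lborel) = (\<integral>\<^sup>+x. indicator {a..b} x \<partial>lborel)"
    by (intro nn_integral_cong) (auto simp: indicator_def)
  then show ?thesis by (simp add: max_def)
qed

definition avg :: "real \<Rightarrow> (real \<Rightarrow> real) \<Rightarrow> real \<Rightarrow> real" where
  "avg m g u = m * (\<integral>v. g v * indicator {u..u + 1/m} v \<partial>lborel)"

lemma ind_meas: "(\<lambda>(u::real, v). indicator {u..u + c} v :: real) \<in> borel_measurable (lborel \<Otimes>\<^sub>M lborel)"
proof -
  have "(\<lambda>(u, v). indicator {u..u + c} v :: real) = (\<lambda>x. if fst x \<le> snd x \<and> snd x \<le> fst x + c then 1 else 0)"
    by (auto simp: indicator_def fun_eq_iff)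
  also have "\<dots> \<in> borel_measurable (lborel \<Otimes>\<^sub>M lborel)"
  proof -
    have [measurable]: "fst \<in> borel_measurable (lborel \<Otimes>\<^sub>M (lborel::real measure))"
       "snd \<in> borel_measurable (lborel \<Otimes>\<^sub>M (lborel::real measure))"
      by (simp_all add: measurable_lborel2) 
    show ?thesis by measurable
  qed
  finally show ?thesis .
qed

lemma avg_measurable[measurable]:
  assumes [measurable]: "g \<in> borel_measurable lborel"
  shows "avg m g \<in> borel_measurable lborel"
proof -
  have [measurable]: "(\<lambda>(u, v). g v * indicator {u..u + 1/m} v) \<in> borel_measurable (lborel \<Otimes>\<^sub>M lborel)"
    using ind_meas[of "1/m"] by (simp add: case_prod_beta') measurable
  show ?thesis unfolding avg_def
    by measurable
qed

lemma avg_sq_local: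
  assumes m: "m > 0" and [measurable]: "g \<in> borel_measurable lborel"
  shows "ennreal ((avg m g u)\<^sup>2) \<le> ennreal m * (\<integral>\<^sup>+v. ennreal ((g v)\<^sup>2) * indicator {u..u + 1/m} v \<partial>lborel)"
proof -
  let ?I = "{u..u + 1/m}"
  have eq: "(\<integral>v. g v * indicator ?I v \<partial>lborel) = (\<integral>v. (g v * indicator ?I v) * indicator ?I v \<partial>lborel)"
    by (intro Bochner_Integration.integral_cong) (auto simp: indicator_def)
  have "ennreal ((\<integral>v. g v * indicator ?I v \<partial>lborel)\<^sup>2) \<le>
     (\<integral>\<^sup>+x. ennreal ((g x * indicator ?I x)\<^sup>2) \<partial>lborel) * (\<integral>\<^sup>+x. ennreal ((indicator ?I x)\<^sup>2) \<partial>lborel)"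
    unfolding eq by (rule CS_int) auto
  also have "(\<integral>\<^sup>+x. ennreal ((g x * indicator ?I x)\<^sup>2) \<partial>lborel) = (\<integral>\<^sup>+v. ennreal ((g v)\<^sup>2) * indicator ?I v \<partial>lborel)"
    by (intro nn_integral_cong) (auto simp: indicator_def)
  also have "(\<integral>\<^sup>+x. ennreal ((indicator ?I x)\<^sup>2) \<partial>lborel) = ennreal (1/m)"
    using m by (simp add: nn_sq_indicator)
  finally have *: "ennreal ((\<integral>v. g v * indicator ?I v \<partial>lborel)\<^sup>2) \<le> (\<integral>\<^sup>+v. ennreal ((g v)\<^sup>2) * indicator ?I v \<partial>lborel) * ennreal (1/m)" .
  have "ennreal ((avg m g u)\<^sup>2) = ennreal (m\<^sup>2) * ennreal ((\<integral>v. g v * indicator ?I v \<partial>lborel)\<^sup>2)"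
    by (simp add: avg_def power_mult_distrib ennreal_mult)
  also have "\<dots> \<le> ennreal (m\<^sup>2) * ((\<integral>\<^sup>+v. ennreal ((g v)\<^sup>2) * indicator ?I v \<partial>lborel) * ennreal (1/m))"
    by (intro mult_left_mono *) auto
  also have "\<dots> = ennreal (m\<^sup>2 * (1/m)) * (\<integral>\<^sup>+v. ennreal ((g v)\<^sup>2) * indicator ?I v \<partial>lborel)"
    using m by (subst ennreal_mult) (auto simp: mult_ac)
  also have "m\<^sup>2 * (1/m) = m" using m by (simp add: power2_eq_square)
  finally show ?thesis .
qed

lemma avg_contr:
  assumes m: "m > 0" and [measurable]: "g \<in> borel_measurable lborel"
  shows "(\<integral>\<^sup>+u. ennreal ((avg m g u)\<^sup>2) \<partial>lborel) \<le> (\<integral>\<^sup>+v. ennreal ((g v)\<^sup>2) \<partial>lborel)"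
proof -
  have [measurable]: "(\<lambda>(u, v). indicator {u..u + 1/m} v :: real) \<in> borel_measurable (lborel \<Otimes>\<^sub>M lborel)"
    by (rule ind_meas)
  have M2: "(\<lambda>(u, v). ennreal m * (ennreal ((g v)\<^sup>2) * ennreal (indicator {u..u + 1/m} v))) \<in> borel_measurable (lborel \<Otimes>\<^sub>M lborel)"
    by measurable
  have "(\<integral>\<^sup>+u. ennreal ((avg m g u)\<^sup>2) \<partial>lborel) \<le>
      (\<integral>\<^sup>+u. ennreal m * (\<integral>\<^sup>+v. ennreal ((g v)\<^sup>2) * indicator {u..u + 1/m} v \<partial>lborel) \<partial>lborel)"
    by (intro nn_integral_mono avg_sq_local m) auto
  also have "\<dots> = (\<integral>\<^sup>+u. (\<integral>\<^sup>+v. ennreal m * (ennreal ((g v)\<^sup>2) * ennreal (indicator {u..u + 1/m} v)) \<partial>lborel) \<partial>lborel)"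
    by (intro nn_integral_cong) (simp add: ennreal_indicator nn_integral_cmult[symmetric])
  also have "\<dots> = (\<integral>\<^sup>+v. (\<integral>\<^sup>+u. ennreal m * (ennreal ((g v)\<^sup>2) * ennreal (indicator {u..u + 1/m} v)) \<partial>lborel) \<partial>lborel)"
    using lborel_pair.Fubini'[OF M2] by simp
  also have "\<dots> = (\<integral>\<^sup>+v. (ennreal m * ennreal ((g v)\<^sup>2)) * (\<integral>\<^sup>+u. indicator {v - 1/m..v} u \<partial>lborel) \<partial>lborel)"
  proof (intro nn_integral_cong)
    fix v
    have "(\<integral>\<^sup>+u. ennreal m * (ennreal ((g v)\<^sup>2) * ennreal (indicator {u..u + 1/m} v)) \<partial>lborel)
        = (\<integral>\<^sup>+u. (ennreal m * ennreal ((g v)\<^sup>2)) * indicator {v - 1/m..v} u \<partial>lborel)"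
      by (intro nn_integral_cong) (auto simp: indicator_def mult_ac)
    also have "\<dots> = (ennreal m * ennreal ((g v)\<^sup>2)) * (\<integral>\<^sup>+u. indicator {v - 1/m..v} u \<partial>lborel)"
      by (intro nn_integral_cmult) auto
    finally show "(\<integral>\<^sup>+u. ennreal m * (ennreal ((g v)\<^sup>2) * ennreal (indicator {u..u + 1/m} v)) \<partial>lborel) =
       (ennreal m * ennreal ((g v)\<^sup>2)) * (\<integral>\<^sup>+u. indicator {v - 1/m..v} u \<partial>lborel)" .
  qed
  also have "\<dots> = (\<integral>\<^sup>+v. ennreal ((g v)\<^sup>2) \<partial>lborel)"
  proof (intro nn_integral_cong)
    fix v
    have "(\<integral>\<^sup>+u. indicator {v - 1/m..v} u \<partial>lborel) = ennreal (1/m)" using m by simp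
    then show "(ennreal m * ennreal ((g v)\<^sup>2)) * (\<integral>\<^sup>+u. indicator {v - 1/m..v} u \<partial>lborel) = ennreal ((g v)\<^sup>2)"
      using m by (simp add: ennreal_mult[symmetric] mult_ac)
  qed
  finally show ?thesis .
qed



lemma int_ind_L2: "(\<integral>\<^sup>+x. ennreal ((indicator {a..b::real} x)\<^sup>2) \<partial>lborel) < \<infinity>"
  by (simp add: nn_sq_indicator)

lemma avg_diff:
  assumes [measurable]: "g1 \<in> borel_measurable lborel" "g2 \<in> borel_measurable lborel"
    and f1: "(\<integral>\<^sup>+x. ennreal ((g1 x)\<^sup>2) \<partial>lborel) < \<infinity>"
    and f2: "(\<integral>\<^sup>+x. ennreal ((g2 x)\<^sup>2) \<partial>lborel) < \<infinity>"
  shows "avg m g1 u - avg m g2 u = avg m (\<lambda>v. g1 v - g2 v) u"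
proof -
  have i1: "integrable lborel (\<lambda>v. g1 v * indicator {u..u + 1/m} v)"
    by (rule L2_prod_integrable[OF _ _ f1 int_ind_L2]) auto
  have i2: "integrable lborel (\<lambda>v. g2 v * indicator {u..u + 1/m} v)"
    by (rule L2_prod_integrable[OF _ _ f2 int_ind_L2]) auto
  show ?thesis
    unfolding avg_def using Bochner_Integration.integral_diff[OF i1 i2]
    by (simp add: right_diff_distrib left_diff_distrib)
qed

lemma avg_sq_bound:
  assumes m: "m > 0" and [measurable]: "g \<in> borel_measurable lborel"
    and B: "(\<integral>\<^sup>+x. ennreal ((g x)\<^sup>2) \<partial>lborel) \<le> ennreal B" "B \<ge> 0"
  shows "(avg m g u)\<^sup>2 \<le> m * B"
proof -
  have "ennreal ((avg m g u)\<^sup>2) \<le> ennreal m * (\<integral>\<^sup>+v. ennreal ((g v)\<^sup>2) * indicator {u..u + 1/m} v \<partial>lborel)"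
    by (rule avg_sq_local[OF m]) auto
  also have "\<dots> \<le> ennreal m * (\<integral>\<^sup>+v. ennreal ((g v)\<^sup>2) \<partial>lborel)"
    by (intro mult_left_mono nn_integral_mono) (auto simp: indicator_def)
  also have "\<dots> \<le> ennreal m * ennreal B"
    by (intro mult_left_mono B) auto
  also have "\<dots> = ennreal (m * B)" using m B by (simp add: ennreal_mult)
  finally show ?thesis using m B by (simp add: ennreal_le_iff)
qed

lemma ind_diff_pt:
  fixes u u' d v :: real
  shows "(indicator {u..u+d} v - indicator {u'..u'+d} v)\<^sup>2 \<le> (indicator {min u u'..max u u'} v + indicator {min u u' + d..max u u' + d} v :: real)"
  unfolding indicator_def by (cases "u \<le> u'") (simp_all add: min_def max_def)

lemma ind_diff_sq:
  fixes u u' d :: real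
  assumes "d \<ge> 0"
  shows "(\<integral>\<^sup>+v. ennreal ((indicator {u..u+d} v - indicator {u'..u'+d} v)\<^sup>2) \<partial>lborel) \<le> ennreal (2 * \<bar>u - u'\<bar>)"
proof -
  have "(\<integral>\<^sup>+v. ennreal ((indicator {u..u+d} v - indicator {u'..u'+d} v)\<^sup>2) \<partial>lborel) \<le>
     (\<integral>\<^sup>+v. indicator {min u u'..max u u'} v + indicator {min u u' + d..max u u' + d} v \<partial>lborel)"
  proof (intro nn_integral_mono)
    fix v
    have "ennreal ((indicator {u..u+d} v - indicator {u'..u'+d} v)\<^sup>2) \<le> ennreal (indicator {min u u'..max u u'} v + indicator {min u u' + d..max u u' + d} v)"
      by (intro ennreal_leI ind_diff_pt)
    then show "ennreal ((indicator {u..u+d} v - indicator {u'..u'+d} v)\<^sup>2) \<le> indicator {min u u'..max u u'} v + indicator {min u u' + d..max u u' + d} v"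
      by (simp add: ennreal_plus ennreal_indicator)
  qed
  also have "\<dots> = ennreal (\<bar>u - u'\<bar>) + ennreal (\<bar>u - u'\<bar>)"
    by (subst nn_integral_add) (auto simp: max_def min_def)
  also have "\<dots> = ennreal (2 * \<bar>u - u'\<bar>)"
    by (simp add: ennreal_plus[symmetric] del: ennreal_plus)
  finally show ?thesis .
qed

lemma avg_shift_bound:
  assumes m: "m > 0" and [measurable]: "g \<in> borel_measurable lborel"
    and B: "(\<integral>\<^sup>+x. ennreal ((g x)\<^sup>2) \<partial>lborel) \<le> ennreal B" "B \<ge> 0"
  shows "(avg m g u - avg m g u')\<^sup>2 \<le> m\<^sup>2 * (B * (2 * \<bar>u - u'\<bar>))"
proof -
  let ?p = "\<lambda>v. indicator {u..u+1/m} v - indicator {u'..u'+1/m} v :: real"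
  have fg: "(\<integral>\<^sup>+x. ennreal ((g x)\<^sup>2) \<partial>lborel) < \<infinity>"
    using B by (simp add: le_less_trans)
  have i1: "integrable lborel (\<lambda>v. g v * indicator {u..u + 1/m} v)"
    by (rule L2_prod_integrable[OF _ _ fg int_ind_L2]) auto
  have i2: "integrable lborel (\<lambda>v. g v * indicator {u'..u' + 1/m} v)"
    by (rule L2_prod_integrable[OF _ _ fg int_ind_L2]) auto
  have eq: "avg m g u - avg m g u' = m * (\<integral>v. g v * ?p v \<partial>lborel)"
    unfolding avg_def using Bochner_Integration.integral_diff[OF i1 i2]
    by (simp add: right_diff_distrib)
  have "ennreal ((\<integral>v. g v * ?p v \<partial>lborel)\<^sup>2) \<le>
     (\<integral>\<^sup>+x. ennreal ((g x)\<^sup>2) \<partial>lborel) * (\<integral>\<^sup>+x. ennreal ((?p x)\<^sup>2) \<partial>lborel)"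
    by (rule CS_int) auto
  also have "\<dots> \<le> ennreal B * ennreal (2 * \<bar>u - u'\<bar>)"
    using m by (intro mult_mono B ind_diff_sq) auto
  also have "\<dots> = ennreal (B * (2 * \<bar>u - u'\<bar>))" using B by (simp add: ennreal_mult)
  finally have "(\<integral>v. g v * ?p v \<partial>lborel)\<^sup>2 \<le> B * (2 * \<bar>u - u'\<bar>)"
    using B by (simp add: ennreal_le_iff)
  then show ?thesis unfolding eq power_mult_distrib
    by (intro mult_left_mono) auto
qed

lemma ennreal_squeeze:
  fixes x y :: "nat \<Rightarrow> ennreal"
  assumes xy: "\<And>n. x n + y n \<le> a" and l: "a \<le> liminf y" and fin: "a < \<infinity>"
  shows "x \<longlonglongrightarrow> 0"
proof (rule order_tendstoI)
  fix e :: ennreal assume "e < 0" then show "eventually (\<lambda>n. e < x n) sequentially" by simp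
next
  fix e :: ennreal assume e: "0 < e"
  show "eventually (\<lambda>n. x n < e) sequentially"
  proof (cases "e \<le> a")
    case False
    have "x n < e" for n
    proof -
      have "x n \<le> x n + y n" by simp
      also have "\<dots> \<le> a" by (rule xy)
      finally show ?thesis using False by simp
    qed
    then show ?thesis by simp
  next
    case True
    have "a - e < a" using e True fin by (metis diff_diff_ennreal diff_le_self_ennreal ennreal_diff_self
    infinity_ennreal_def order.asym order_le_imp_less_or_eq)
    then have "a - e < liminf y" using l by (rule less_le_trans)
    then have "eventually (\<lambda>n. a - e < y n) sequentially" by (rule less_LiminfD)
    then show ?thesis
    proof (rule eventually_mono)
      fix n assume "a - e < y n"
      then show "x n < e" using True fin xy[of n]
        by (metis add.commute ennreal_add_left_cancel_less ennreal_le_minus_iff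
          linorder_not_less order_trans)
    qed
  qed
qed

lemma avg_eq_integral:
  assumes m: "m > 0" and [measurable]: "g \<in> borel_measurable lborel"
    and fg: "(\<integral>\<^sup>+x. ennreal ((g x)\<^sup>2) \<partial>lborel) < \<infinity>"
  shows "avg m g x = integral {x..x + 1/m} g / (1/m)"
proof -
  have "integrable lborel (\<lambda>v. g v * indicator {x..x + 1/m} v)"
    by (rule L2_prod_integrable[OF _ _ fg int_ind_L2]) auto
  then have si: "set_integrable lborel {x..x + 1/m} g"
    unfolding set_integrable_def by (simp add: mult.commute)
  have "(\<integral>v. g v * indicator {x..x + 1/m} v \<partial>lborel) = (LINT v:{x..x + 1/m}|lborel. g v)"
    unfolding set_lebesgue_integral_def by (simp add: mult.commute)
  also have "\<dots> = integral {x..x + 1/m} g"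
    by (rule set_borel_integral_eq_integral(2)[OF si])
  finally show ?thesis unfolding avg_def using m by simp
qed

lemma avg_ae:
  assumes [measurable]: "g \<in> borel_measurable lborel"
    and fg: "(\<integral>\<^sup>+x. ennreal ((g x)\<^sup>2) \<partial>lborel) < \<infinity>"
  shows "AE v in lborel. (\<lambda>M. avg (Suc M) g v) \<longlonglongrightarrow> g v"
proof -
  have int: "g integrable_on cbox a b" for a b :: real
  proof -
    have "integrable lborel (\<lambda>v. g v * indicator {a..b} v)"
      by (rule L2_prod_integrable[OF _ _ fg int_ind_L2]) auto
    then have si: "set_integrable lborel {a..b} g"
      unfolding set_integrable_def by (simp add: mult.commute)
    show ?thesis using set_borel_integral_eq_integral(1)[OF si] by simp
  qed
  obtain N where N: "negligible N"
    and conv: "\<And>x e. \<lbrakk>x \<notin> N; 0 < e\<rbrakk> \<Longrightarrow> \<exists>d>0. \<forall>h. 0 < h \<and> h < d \<longrightarrow>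
                         norm(integral (cbox x (x + h *\<^sub>R One)) g /\<^sub>R h ^ DIM(real) - g x) < e"
    using integrable_ccontinuous_explicit[of g] int by blast
  have "(\<lambda>M. avg (Suc M) g x) \<longlonglongrightarrow> g x" if x: "x \<notin> N" for x
  proof (rule LIMSEQ_I)
    fix r :: real assume r: "0 < r"
    obtain d where d: "d > 0" and dd: "\<And>h. 0 < h \<Longrightarrow> h < d \<Longrightarrow>
        norm(integral (cbox x (x + h *\<^sub>R One)) g /\<^sub>R h ^ DIM(real) - g x) < r"
      using conv[OF x r] by blast
    obtain n0 where n0: "inverse (real (Suc n0)) < d" using reals_Archimedean[OF d] by blast
    show "\<exists>no. \<forall>n\<ge>no. norm (avg (Suc n) g x - g x) < r"
    proof (intro exI allI impI)
      fix n assume n: "n0 \<le> n"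
      have "inverse (real (Suc n)) \<le> inverse (real (Suc n0))"
        using n by (simp add: le_imp_inverse_le)
      then have hd: "1 / real (Suc n) < d" using n0 by (simp add: inverse_eq_divide)
      have "norm(integral (cbox x (x + (1 / real (Suc n)) *\<^sub>R One)) g /\<^sub>R (1 / real (Suc n)) ^ DIM(real) - g x) < r"
        by (rule dd) (use hd in auto)
      moreover have "avg (Suc n) g x = integral {x..x + 1/real (Suc n)} g / (1/real (Suc n))"
        by (rule avg_eq_integral[OF _ _ fg]) auto
      ultimately show "norm (avg (Suc n) g x - g x) < r"
        by (simp add: divide_inverse mult.commute)
    qed
  qed
  then have "{x. \<not> (\<lambda>M. avg (Suc M) g x) \<longlonglongrightarrow> g x} \<subseteq> N" by blast
  then have "AE x in lebesgue. (\<lambda>M. avg (Suc M) g x) \<longlonglongrightarrow> g x"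
    using N eventually_ae_filter_negligible by blast
  then show ?thesis by (simp add: AE_completion_iff)
qed

lemma avg_L2_conv:
  assumes [measurable]: "g \<in> borel_measurable lborel"
    and fg: "(\<integral>\<^sup>+x. ennreal ((g x)\<^sup>2) \<partial>lborel) < \<infinity>"
  shows "(\<lambda>M. \<integral>\<^sup>+v. ennreal ((g v - avg (Suc M) g v)\<^sup>2) \<partial>lborel) \<longlonglongrightarrow> 0"
proof -
  define C where "C = (\<integral>\<^sup>+x. ennreal ((g x)\<^sup>2) \<partial>lborel)"
  define Y where "Y = (\<lambda>M. \<integral>\<^sup>+v. ennreal ((avg (Suc M) g v + g v)\<^sup>2) \<partial>lborel)"
  have xy: "(\<integral>\<^sup>+v. ennreal ((g v - avg (Suc M) g v)\<^sup>2) \<partial>lborel) + Y M \<le> 4 * C" for M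
  proof -
    let ?a = "avg (Suc M) g"
    have "(\<integral>\<^sup>+v. ennreal ((g v - ?a v)\<^sup>2) \<partial>lborel) + Y M =
        (\<integral>\<^sup>+v. ennreal ((g v - ?a v)\<^sup>2) + ennreal ((?a v + g v)\<^sup>2) \<partial>lborel)"
      unfolding Y_def by (subst nn_integral_add) auto
    also have "\<dots> = (\<integral>\<^sup>+v. 2 * ennreal ((?a v)\<^sup>2) + 2 * ennreal ((g v)\<^sup>2) \<partial>lborel)"
    proof (intro nn_integral_cong)
      fix v
      have "ennreal ((g v - ?a v)\<^sup>2) + ennreal ((?a v + g v)\<^sup>2) = ennreal ((g v - ?a v)\<^sup>2 + (?a v + g v)\<^sup>2)"
        by (simp add: ennreal_plus)
      also have "(g v - ?a v)\<^sup>2 + (?a v + g v)\<^sup>2 = 2 * (?a v)\<^sup>2 + 2 * (g v)\<^sup>2"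
        by (simp add: power2_eq_square algebra_simps)
      also have "ennreal (2 * (?a v)\<^sup>2 + 2 * (g v)\<^sup>2) = 2 * ennreal ((?a v)\<^sup>2) + 2 * ennreal ((g v)\<^sup>2)"
        by (simp add: ennreal_plus ennreal_mult)
      finally show "ennreal ((g v - ?a v)\<^sup>2) + ennreal ((?a v + g v)\<^sup>2) = 2 * ennreal ((?a v)\<^sup>2) + 2 * ennreal ((g v)\<^sup>2)" .
    qed
    also have "\<dots> = 2 * (\<integral>\<^sup>+v. ennreal ((?a v)\<^sup>2) \<partial>lborel) + 2 * C"
      unfolding C_def by (simp add: nn_integral_add nn_integral_cmult)
    also have "\<dots> \<le> 2 * C + 2 * C"
      unfolding C_def by (intro add_mono mult_left_mono avg_contr) auto
    also have "\<dots> = 4 * C" by (simp add: ring_distribs(2)[symmetric])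
    finally show ?thesis .
  qed
  have "4 * C = (\<integral>\<^sup>+x. liminf (\<lambda>M. ennreal ((avg (Suc M) g x + g x)\<^sup>2)) \<partial>lborel)"
  proof -
    have "4 * C = (\<integral>\<^sup>+x. ennreal ((2 * g x)\<^sup>2) \<partial>lborel)"
      unfolding C_def by (simp add: nn_integral_cmult[symmetric] ennreal_mult power_mult_distrib)
    also have "\<dots> = (\<integral>\<^sup>+x. liminf (\<lambda>M. ennreal ((avg (Suc M) g x + g x)\<^sup>2)) \<partial>lborel)"
    proof (intro nn_integral_cong_AE)
      show "AE x in lborel. ennreal ((2 * g x)\<^sup>2) = liminf (\<lambda>M. ennreal ((avg (Suc M) g x + g x)\<^sup>2))"
        using avg_ae[OF assms(1) fg]
      proof (eventually_elim)
        case (elim x)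
        have "(\<lambda>M. ennreal ((avg (Suc M) g x + g x)\<^sup>2)) \<longlonglongrightarrow> ennreal ((g x + g x)\<^sup>2)"
          by (intro tendsto_ennrealI tendsto_intros elim)
        then have "liminf (\<lambda>M. ennreal ((avg (Suc M) g x + g x)\<^sup>2)) = ennreal ((g x + g x)\<^sup>2)"
          by (intro lim_imp_Liminf) auto
        then show ?case by simp
      qed
    qed
    finally show ?thesis .
  qed
  also have "\<dots> \<le> liminf Y"
    unfolding Y_def by (rule nn_integral_liminf) auto
  finally have l: "4 * C \<le> liminf Y" .
  have fin: "4 * C < \<infinity>" using fg unfolding C_def by (simp add: ennreal_mult_less_top)
  show ?thesis by (rule ennreal_squeeze[OF xy l fin])
qed




lemma kincr_eq:
  fixes K :: "real \<Rightarrow> real \<Rightarrow> real"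
  assumes [measurable]: "(\<lambda>v. K t v * indicator {0<..<t} v) \<in> borel_measurable lborel"
    "(\<lambda>v. K s v * indicator {0<..<s} v) \<in> borel_measurable lborel"
    and st: "0 \<le> s" "s \<le> t"
  shows "kernel_incr K t s = (\<integral>\<^sup>+v. ennreal ((K t v * indicator {0<..<t} v - K s v * indicator {0<..<s} v)\<^sup>2) \<partial>lborel)"
proof -
  define D where "D v = ennreal ((K t v * indicator {0<..<t} v - K s v * indicator {0<..<s} v)\<^sup>2)" for v
  have [measurable]: "D \<in> borel_measurable lborel" unfolding D_def by measurable
  have "kernel_incr K t s = (\<integral>\<^sup>+v. D v * indicator {s<..<t} v \<partial>lborel) + (\<integral>\<^sup>+v. D v * indicator {0<..<s} v \<partial>lborel)"
    unfolding kernel_incr_def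
    using st by (intro arg_cong2[where f="(+)"] nn_integral_cong) (auto simp: D_def indicator_def)
  also have "\<dots> = (\<integral>\<^sup>+v. D v * indicator {s<..<t} v + D v * indicator {0<..<s} v \<partial>lborel)"
    by (subst nn_integral_add) auto
  also have "\<dots> = (\<integral>\<^sup>+v. D v \<partial>lborel)"
  proof (intro nn_integral_cong_AE)
    show "AE v in lborel. D v * indicator {s<..<t} v + D v * indicator {0<..<s} v = D v"
      using AE_lborel_singleton[of s]
    proof eventually_elim
      case (elim v)
      then show ?case using st by (auto simp: D_def indicator_def)
    qed
  qed
  finally show ?thesis unfolding D_def .
qed

lemma sq3: "(x + y)\<^sup>2 \<le> 3/2 * x\<^sup>2 + 3 * (y::real)\<^sup>2"
proof -
  have "0 \<le> (x - 2*y)\<^sup>2 / 2" by simp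
  then show ?thesis by (simp add: power2_eq_square algebra_simps)
qed

lemma sq2: "(x - y)\<^sup>2 \<le> 2 * x\<^sup>2 + 2 * (y::real)\<^sup>2"
proof -
  have "0 \<le> (x + y)\<^sup>2" by simp
  then show ?thesis by (simp add: power2_eq_square algebra_simps)
qed

lemma delta_powr:
  fixes d T g :: real
  assumes "0 \<le> d" "d \<le> T" "0 \<le> g" "g \<le> 1"
  shows "d \<le> (T + 1) * d powr g"
proof (cases "d \<le> 1")
  case True
  have "d = d powr 1" using assms by simp
  also have "\<dots> \<le> d powr g" using True assms by (intro powr_mono') auto
  finally have "d \<le> d powr g" .
  moreover have "d powr g \<le> (T+1) * d powr g"
  proof -
    have "0 \<le> T * d powr g" using assms by simp
    then show ?thesis by (simp add: distrib_right)
  qed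
  ultimately show ?thesis by simp
next
  case False
  then have "1 \<le> d powr g" using assms by (intro ge_one_powr_ge_zero) auto
  then show ?thesis using assms False by (smt (verit) mult_le_cancel_left1)
qed




theorem mainTheorem9:
  fixes \<Gamma> :: "real \<Rightarrow> real \<Rightarrow> real" and T \<eta> \<gamma> :: real
  assumes K: "condK \<Gamma>"
    and T: "T > 0"
    and KT: "condK_T \<Gamma> T \<eta> \<gamma>"
  shows "\<exists>\<Gamma>M :: nat \<Rightarrow> real \<Rightarrow> real \<Rightarrow> real.
     (\<forall>M. continuous_on {(t, s). 0 \<le> s \<and> s \<le> t \<and> t \<le> T} (\<lambda>(t, s). \<Gamma>M M t s)) \<and>
     (\<forall>t\<in>{0..T}. (\<lambda>M. \<integral>\<^sup>+ s. ennreal ((\<Gamma> t s - \<Gamma>M M t s)\<^sup>2) * indicator {0<..<t} s \<partial>lborel)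
                    \<longlonglongrightarrow> 0) \<and>
     (\<forall>M t s. 0 \<le> s \<and> s \<le> t \<and> t \<le> T \<longrightarrow>
        kernel_incr (\<Gamma>M M) t s \<le> ennreal (2 * \<eta> * \<bar>t - s\<bar> powr (2 * \<gamma>))) \<and>
     ((\<exists>\<epsilon>>0. (\<forall>t s. 0 < s \<and> s < t \<and> s \<ge> t - \<epsilon> \<longrightarrow> \<Gamma> t s \<ge> 0) \<or>
              (\<forall>t s. 0 < s \<and> s < t \<and> s \<ge> t - \<epsilon> \<longrightarrow> \<Gamma> t s \<le> 0)) \<longrightarrow>
       (\<forall>M. AE s in lborel. s \<in> {0..T} \<longrightarrow> \<Gamma>M M s s \<noteq> 0))"
proof -
  from KT have eta: "\<eta> > 0" and g0: "0 < \<gamma>" and g1: "\<gamma> \<le> 1/2"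
    and bnd: "\<And>t s. 0 \<le> s \<Longrightarrow> s \<le> t \<Longrightarrow> t \<le> T \<Longrightarrow> kernel_incr \<Gamma> t s \<le> ennreal (\<eta> * (t - s) powr (2 * \<gamma>))"
    unfolding condK_T_def by auto
  from K have meas: "\<And>t. t > 0 \<Longrightarrow> (\<lambda>u. \<Gamma> t u * indicator {0<..<t} u) \<in> borel_measurable lborel"
    unfolding condK_def by auto
  define h where "h t v = \<Gamma> t v * indicator {0<..<t} v" for t v
  have hm[measurable]: "h t \<in> borel_measurable lborel" for t
  proof (cases "t > 0")
    case True then show ?thesis using meas[OF True] unfolding h_def[abs_def] by simp
  next
    case False then have "h t = (\<lambda>_. 0)" by (auto simp: h_def[abs_def] fun_eq_iff)
    then show ?thesis by simp
  qed
  have hincr: "(\<integral>\<^sup>+v. ennreal ((h t v - h s v)\<^sup>2) \<partial>lborel) \<le> ennreal (\<eta> * (t - s) powr (2 * \<gamma>))"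
    if "0 \<le> s" "s \<le> t" "t \<le> T" for s t
  proof -
    have "(\<integral>\<^sup>+v. ennreal ((h t v - h s v)\<^sup>2) \<partial>lborel) = kernel_incr \<Gamma> t s"
      unfolding h_def using hm[of t] hm[of s] that by (subst kincr_eq) (auto simp: h_def[abs_def])
    also have "\<dots> \<le> ennreal (\<eta> * (t - s) powr (2 * \<gamma>))" by (rule bnd) (use that in auto)
    finally show ?thesis .
  qed
  have h0: "h 0 = (\<lambda>_. 0)" by (auto simp: h_def[abs_def] fun_eq_iff)
  define B0 where "B0 = \<eta> * T powr (2 * \<gamma>)"
  have B0: "B0 \<ge> 0" unfolding B0_def using eta by simp
  have hsq: "(\<integral>\<^sup>+v. ennreal ((h t v)\<^sup>2) \<partial>lborel) \<le> ennreal B0" if "0 \<le> t" "t \<le> T" for t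
  proof -
    have "(\<integral>\<^sup>+v. ennreal ((h t v)\<^sup>2) \<partial>lborel) \<le> ennreal (\<eta> * (t - 0) powr (2 * \<gamma>))"
      using hincr[of 0 t] that by (simp add: h0)
    also have "\<dots> \<le> ennreal B0" unfolding B0_def using that eta g0
      by (intro ennreal_leI mult_left_mono powr_mono2) auto
    finally show ?thesis .
  qed
  have hfin: "(\<integral>\<^sup>+v. ennreal ((h t v)\<^sup>2) \<partial>lborel) < \<infinity>" if "0 \<le> t" "t \<le> T" for t
    using hsq[OF that] by (simp add: le_less_trans)
  have hdiff: "(\<integral>\<^sup>+v. ennreal ((h t v - h t0 v)\<^sup>2) \<partial>lborel) \<le> ennreal (\<eta> * \<bar>t - t0\<bar> powr (2 * \<gamma>))"
    if "0 \<le> t" "t \<le> T" "0 \<le> t0" "t0 \<le> T" for t t0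
  proof (cases "t0 \<le> t")
    case True then show ?thesis using hincr[of t0 t] that by simp
  next
    case False
    have "(\<integral>\<^sup>+v. ennreal ((h t v - h t0 v)\<^sup>2) \<partial>lborel) = (\<integral>\<^sup>+v. ennreal ((h t0 v - h t v)\<^sup>2) \<partial>lborel)"
      by (simp add: power2_commute)
    also have "\<dots> \<le> ennreal (\<eta> * (t0 - t) powr (2 * \<gamma>))" using hincr[of t t0] that False by simp
    finally show ?thesis using False by simp
  qed
  have avg0: "avg m (h s) u = 0" if "s \<le> u" for m s u
  proof -
    have "(\<lambda>v. h s v * indicator {u..u + 1/m} v) = (\<lambda>_. 0)"
      using that by (auto simp: h_def indicator_def fun_eq_iff)
    then show ?thesis unfolding avg_def by simp
  qed
  define c where "c = sqrt (\<eta> / (6 * (T + 1)))"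
  have c: "c > 0" unfolding c_def using eta T by simp
  have c2: "c\<^sup>2 = \<eta> / (6 * (T + 1))" unfolding c_def using eta T by simp
  define \<Gamma>M where "\<Gamma>M M t u = avg (Suc M) (h t) u + c / Suc M" for M t u
  show ?thesis
  proof (intro exI[of _ \<Gamma>M] conjI allI impI ballI)
    fix M
    let ?S = "{(t, s). 0 \<le> s \<and> s \<le> t \<and> t \<le> T}"
    let ?m = "real (Suc M)"
    show "continuous_on ?S (\<lambda>(t, s). \<Gamma>M M t s)"
      unfolding continuous_on_def
    proof (intro ballI)
      fix x assume x: "x \<in> ?S"
      obtain t0 u0 where x0: "x = (t0, u0)" by (cases x)
      have t0: "0 \<le> t0" "t0 \<le> T" using x x0 by auto
      define F where "F = (\<lambda>p::real\<times>real. sqrt (?m * (\<eta> * \<bar>fst p - t0\<bar> powr (2 * \<gamma>)))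
          + sqrt (?m\<^sup>2 * (B0 * (2 * \<bar>snd p - u0\<bar>))))"
      have P: "continuous_on UNIV (\<lambda>p::real\<times>real. \<bar>fst p - t0\<bar> powr (2 * \<gamma>))"
        by (rule continuous_on_powr') (auto intro!: continuous_intros simp: g0)
      have "continuous_on UNIV F" unfolding F_def by (intro continuous_intros P)
      then have "continuous_on ?S F" by (rule continuous_on_subset) simp
      then have "(F \<longlongrightarrow> F x) (at x within ?S)" using x unfolding continuous_on_def by blast
      moreover have "F x = 0" unfolding F_def x0 using g0 by simp
      ultimately have Fc: "(F \<longlongrightarrow> 0) (at x within ?S)" by simp
      have bound: "norm ((\<lambda>(t, s). \<Gamma>M M t s) p - (\<lambda>(t, s). \<Gamma>M M t s) x) \<le> F p" if p: "p \<in> ?S" for p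
      proof -
        obtain t u where p0: "p = (t, u)" by (cases p)
        have t: "0 \<le> t" "t \<le> T" using p p0 by auto
        have e1: "avg (Suc M) (h t) u - avg (Suc M) (h t0) u = avg (Suc M) (\<lambda>v. h t v - h t0 v) u"
          by (rule avg_diff[OF hm hm hfin hfin]) (use t t0 in auto)
        have "(avg (Suc M) (\<lambda>v. h t v - h t0 v) u)\<^sup>2 \<le> ?m * (\<eta> * \<bar>t - t0\<bar> powr (2 * \<gamma>))"
          by (rule avg_sq_bound) (use hdiff[OF t t0] eta in auto)
        then have b1: "\<bar>avg (Suc M) (h t) u - avg (Suc M) (h t0) u\<bar> \<le> sqrt (?m * (\<eta> * \<bar>t - t0\<bar> powr (2 * \<gamma>)))"
          unfolding e1 by (intro real_le_rsqrt) simp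
        have "(avg (Suc M) (h t0) u - avg (Suc M) (h t0) u0)\<^sup>2 \<le> ?m\<^sup>2 * (B0 * (2 * \<bar>u - u0\<bar>))"
          by (rule avg_shift_bound) (use hsq[OF t0] B0 in auto)
        then have b2: "\<bar>avg (Suc M) (h t0) u - avg (Suc M) (h t0) u0\<bar> \<le> sqrt (?m\<^sup>2 * (B0 * (2 * \<bar>u - u0\<bar>)))"
          by (intro real_le_rsqrt) simp
        have "(\<lambda>(t, s). \<Gamma>M M t s) p - (\<lambda>(t, s). \<Gamma>M M t s) x =
            (avg (Suc M) (h t) u - avg (Suc M) (h t0) u) + (avg (Suc M) (h t0) u - avg (Suc M) (h t0) u0)"
          unfolding p0 x0 by (simp add: \<Gamma>M_def)
        then show ?thesis using b1 b2 unfolding F_def p0 by simp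
      qed
      have "((\<lambda>p. (\<lambda>(t, s). \<Gamma>M M t s) p - (\<lambda>(t, s). \<Gamma>M M t s) x) \<longlongrightarrow> 0) (at x within ?S)"
      proof (rule Lim_null_comparison[OF _ Fc])
        show "eventually (\<lambda>p. norm ((\<lambda>(t, s). \<Gamma>M M t s) p - (\<lambda>(t, s). \<Gamma>M M t s) x) \<le> F p) (at x within ?S)"
          unfolding eventually_at_filter by (intro always_eventually allI impI bound)
      qed
      then show "((\<lambda>(t, s). \<Gamma>M M t s) \<longlongrightarrow> (\<lambda>(t, s). \<Gamma>M M t s) x) (at x within ?S)"
        by (simp add: LIM_zero_iff)
    qed
  next
    fix t :: real assume t: "t \<in> {0..T}"
    let ?X = "\<lambda>M. \<integral>\<^sup>+v. ennreal ((h t v - avg (Suc M) (h t) v)\<^sup>2) \<partial>lborel"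
    have X: "?X \<longlonglongrightarrow> 0" by (rule avg_L2_conv[OF hm hfin]) (use t in auto)
    have bd: "(\<integral>\<^sup>+ s. ennreal ((\<Gamma> t s - \<Gamma>M M t s)\<^sup>2) * indicator {0<..<t} s \<partial>lborel)
        \<le> 2 * ?X M + ennreal (2 * (c / Suc M)\<^sup>2 * t)" for M
    proof -
      let ?e = "c / real (Suc M)"
      have "(\<integral>\<^sup>+ s. ennreal ((\<Gamma> t s - \<Gamma>M M t s)\<^sup>2) * indicator {0<..<t} s \<partial>lborel)
        \<le> (\<integral>\<^sup>+ s. 2 * ennreal ((h t s - avg (Suc M) (h t) s)\<^sup>2) + ennreal (2 * ?e\<^sup>2) * indicator {0<..<t} s \<partial>lborel)"
      proof (intro nn_integral_mono)
        fix s
        show "ennreal ((\<Gamma> t s - \<Gamma>M M t s)\<^sup>2) * indicator {0<..<t} s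
          \<le> 2 * ennreal ((h t s - avg (Suc M) (h t) s)\<^sup>2) + ennreal (2 * ?e\<^sup>2) * indicator {0<..<t} s"
        proof (cases "s \<in> {0<..<t}")
          case True
          have "(\<Gamma> t s - \<Gamma>M M t s)\<^sup>2 = ((h t s - avg (Suc M) (h t) s) - ?e)\<^sup>2"
            using True by (simp add: h_def \<Gamma>M_def algebra_simps)
          also have "\<dots> \<le> 2 * (h t s - avg (Suc M) (h t) s)\<^sup>2 + 2 * ?e\<^sup>2" by (rule sq2)
          finally have "ennreal ((\<Gamma> t s - \<Gamma>M M t s)\<^sup>2) \<le> ennreal (2 * (h t s - avg (Suc M) (h t) s)\<^sup>2 + 2 * ?e\<^sup>2)"
            by (rule ennreal_leI)
          then show ?thesis using True by (simp add: ennreal_plus ennreal_mult)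
        qed simp
      qed
      also have "\<dots> = 2 * ?X M + ennreal (2 * ?e\<^sup>2) * ennreal t"
        using t by (simp add: nn_integral_add nn_integral_cmult)
      also have "\<dots> = 2 * ?X M + ennreal (2 * ?e\<^sup>2 * t)"
        using t by (simp add: ennreal_mult)
      finally show ?thesis .
    qed
    have e0: "(\<lambda>M. c / real (Suc M)) \<longlonglongrightarrow> 0"
      using LIMSEQ_Suc[OF lim_const_over_n[of c]] by simp
    have R: "(\<lambda>M. 2 * ?X M + ennreal (2 * (c / Suc M)\<^sup>2 * t)) \<longlonglongrightarrow> 0"
    proof -
      have "(\<lambda>M. 2 * ?X M) \<longlonglongrightarrow> 2 * 0" by (rule ennreal_tendsto_cmult[OF _ X]) simp
      moreover have "(\<lambda>M. ennreal (2 * (c / Suc M)\<^sup>2 * t)) \<longlonglongrightarrow> ennreal (2 * 0\<^sup>2 * t)"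
        by (intro tendsto_ennrealI tendsto_intros e0)
      ultimately show ?thesis using tendsto_add by fastforce
    qed
    show "(\<lambda>M. \<integral>\<^sup>+ s. ennreal ((\<Gamma> t s - \<Gamma>M M t s)\<^sup>2) * indicator {0<..<t} s \<partial>lborel) \<longlonglongrightarrow> 0"
    proof (rule tendsto_sandwich[OF _ _ tendsto_const R])
      show "eventually (\<lambda>M. (\<integral>\<^sup>+ s. ennreal ((\<Gamma> t s - \<Gamma>M M t s)\<^sup>2) * indicator {0<..<t} s \<partial>lborel)
        \<le> 2 * ?X M + ennreal (2 * (c / Suc M)\<^sup>2 * t)) sequentially"
        by (intro always_eventually allI bd)
    qed simp
  next
    fix M and t s :: real assume ts: "0 \<le> s \<and> s \<le> t \<and> t \<le> T"
    define e where "e = c / real (Suc M)"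
    define D where "D u = avg (Suc M) (h t) u - avg (Suc M) (h s) u" for u
    have [measurable]: "\<Gamma>M M r \<in> borel_measurable lborel" for r
      unfolding \<Gamma>M_def[abs_def] by measurable
    have [measurable]: "D \<in> borel_measurable lborel" unfolding D_def[abs_def] by measurable
    have "kernel_incr (\<Gamma>M M) t s = (\<integral>\<^sup>+u. ennreal ((\<Gamma>M M t u)\<^sup>2) * indicator {s<..<t} u
        + ennreal ((\<Gamma>M M t u - \<Gamma>M M s u)\<^sup>2) * indicator {0<..<s} u \<partial>lborel)"
      unfolding kernel_incr_def by (subst nn_integral_add) auto
    also have "\<dots> \<le> (\<integral>\<^sup>+u. ennreal (3/2 * (D u)\<^sup>2) + ennreal (3 * e\<^sup>2) * indicator {s<..<t} u \<partial>lborel)"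
    proof (intro nn_integral_mono)
      fix u
      show "ennreal ((\<Gamma>M M t u)\<^sup>2) * indicator {s<..<t} u + ennreal ((\<Gamma>M M t u - \<Gamma>M M s u)\<^sup>2) * indicator {0<..<s} u
          \<le> ennreal (3/2 * (D u)\<^sup>2) + ennreal (3 * e\<^sup>2) * indicator {s<..<t} u"
      proof (cases "u \<in> {s<..<t}")
        case True
        have "\<Gamma>M M t u = D u + e" using True avg0[of s u] by (simp add: \<Gamma>M_def D_def e_def)
        then have "(\<Gamma>M M t u)\<^sup>2 \<le> 3/2 * (D u)\<^sup>2 + 3 * e\<^sup>2" using sq3 by simp
        then have "ennreal ((\<Gamma>M M t u)\<^sup>2) \<le> ennreal (3/2 * (D u)\<^sup>2 + 3 * e\<^sup>2)" by (rule ennreal_leI)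
        then show ?thesis using True by (simp add: ennreal_plus)
      next
        case False
        show ?thesis
        proof (cases "u \<in> {0<..<s}")
          case True
          have "\<Gamma>M M t u - \<Gamma>M M s u = D u" by (simp add: \<Gamma>M_def D_def)
          then have "ennreal ((\<Gamma>M M t u - \<Gamma>M M s u)\<^sup>2) \<le> ennreal (3/2 * (D u)\<^sup>2)"
            by (intro ennreal_leI) simp
          then show ?thesis using True False by simp
        qed (use False in simp)
      qed
    qed
    also have "\<dots> = (\<integral>\<^sup>+u. ennreal (3/2) * ennreal ((D u)\<^sup>2) + ennreal (3 * e\<^sup>2) * indicator {s<..<t} u \<partial>lborel)"
      by (intro nn_integral_cong arg_cong2[where f="(+)"] refl ennreal_mult) auto
    also have "\<dots> = (\<integral>\<^sup>+u. ennreal (3/2) * ennreal ((D u)\<^sup>2) \<partial>lborel) + (\<integral>\<^sup>+u. ennreal (3 * e\<^sup>2) * indicator {s<..<t} u \<partial>lborel)"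
      by (rule nn_integral_add) auto
    also have "(\<integral>\<^sup>+u. ennreal (3/2) * ennreal ((D u)\<^sup>2) \<partial>lborel) = ennreal (3/2) * (\<integral>\<^sup>+u. ennreal ((D u)\<^sup>2) \<partial>lborel)"
      by (rule nn_integral_cmult) auto
    also have "(\<integral>\<^sup>+u. ennreal (3 * e\<^sup>2) * indicator {s<..<t} u \<partial>lborel) = ennreal (3 * e\<^sup>2) * ennreal (t - s)"
      using ts by (subst nn_integral_cmult) auto
    also have "(\<integral>\<^sup>+u. ennreal ((D u)\<^sup>2) \<partial>lborel) \<le> ennreal (\<eta> * (t - s) powr (2 * \<gamma>))"
    proof -
      have "(\<integral>\<^sup>+u. ennreal ((D u)\<^sup>2) \<partial>lborel) = (\<integral>\<^sup>+u. ennreal ((avg (Suc M) (\<lambda>v. h t v - h s v) u)\<^sup>2) \<partial>lborel)"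
        unfolding D_def using ts by (subst avg_diff[OF hm hm hfin hfin]) auto
      also have "\<dots> \<le> (\<integral>\<^sup>+v. ennreal ((h t v - h s v)\<^sup>2) \<partial>lborel)"
        by (rule avg_contr) auto
      also have "\<dots> \<le> ennreal (\<eta> * (t - s) powr (2 * \<gamma>))"
        using ts by (intro hincr) auto
      finally show ?thesis .
    qed
    also have "ennreal (3/2) * ennreal (\<eta> * (t - s) powr (2 * \<gamma>)) + ennreal (3 * e\<^sup>2) * ennreal (t - s)
        = ennreal (3/2 * (\<eta> * (t - s) powr (2 * \<gamma>)) + 3 * e\<^sup>2 * (t - s))"
    proof -
      have X: "0 \<le> \<eta> * (t - s) powr (2 * \<gamma>)" using eta by simp
      have Y: "0 \<le> 3 * e\<^sup>2" by simp
      have Z: "0 \<le> t - s" using ts by simp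
      have W: "0 \<le> (3/2::real)" by simp
      have A: "0 \<le> 3/2 * (\<eta> * (t - s) powr (2 * \<gamma>))" using W X by simp
      have B: "0 \<le> 3 * e\<^sup>2 * (t - s)" using Y Z by simp
      show ?thesis
        by (metis ennreal_plus[OF A B] ennreal_mult[OF W X] ennreal_mult[OF Y Z])
    qed
    also have "\<dots> \<le> ennreal (2 * \<eta> * \<bar>t - s\<bar> powr (2 * \<gamma>))"
    proof (intro ennreal_leI)
      have d: "t - s \<le> (T + 1) * (t - s) powr (2 * \<gamma>)"
        using ts g0 g1 by (intro delta_powr) auto
      have "e\<^sup>2 \<le> c\<^sup>2" unfolding e_def using c
        by (simp add: power_divide divide_le_eq)
      then have "3 * e\<^sup>2 * (t - s) \<le> 3 * c\<^sup>2 * (t - s)" using ts by (intro mult_right_mono) auto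
      also have "\<dots> = \<eta> / (2 * (T + 1)) * (t - s)" unfolding c2 using T by (simp add: field_simps)
      also have "\<dots> \<le> \<eta> / (2 * (T + 1)) * ((T + 1) * (t - s) powr (2 * \<gamma>))"
        using eta T d by (intro mult_left_mono) auto
      also have "\<dots> = \<eta> / 2 * (t - s) powr (2 * \<gamma>)" using T by (simp add: field_simps)
      finally have "3 * e\<^sup>2 * (t - s) \<le> \<eta> / 2 * (t - s) powr (2 * \<gamma>)" .
      then show "3/2 * (\<eta> * (t - s) powr (2 * \<gamma>)) + 3 * e\<^sup>2 * (t - s) \<le> 2 * \<eta> * \<bar>t - s\<bar> powr (2 * \<gamma>)"
        using ts by simp
    qed
    finally show "kernel_incr (\<Gamma>M M) t s \<le> ennreal (2 * \<eta> * \<bar>t - s\<bar> powr (2 * \<gamma>))"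
      by (simp add: mult_left_mono)
  next
    fix M
    show "AE s in lborel. s \<in> {0..T} \<longrightarrow> \<Gamma>M M s s \<noteq> 0"
      using c by (intro AE_I2) (simp add: \<Gamma>M_def avg0)
  qed
qed


end
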